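(* Let $f$ be a $\mathbf{\Sigma}$-piecewise linear function on $N_{\mathbb{R}}$ and $\mathcal L=\sum_{i=1}^n f(v_i)E_i\in\mathrm{Pic}_{\mathbb{R}}(\mathbb{P}_{\mathbf{\Sigma}})$. Let $s\in\{1,\dots,n\}$. Then there exists a $\mathbf{\Sigma}$-piecewise linear function $g$ on $N_{\mathbb{R}}$ such that: (i) $\mathcal L=\sum_{i=1}^n g(v_i)E_i$ in $\mathrm{Pic}_{\mathbb{R}}(\mathbb{P}_{\mathbf{\Sigma}})$; (ii) $g(v_s)=0$; (iii) $g(v_i)\ne0$ for every $i$ with $v_i\notin\mathbb{R}v_s$; (iv) if $t\ne s$ and $v_t\in\mathbb{R}v_s$, then $g(v_t)=0$ if and only if the restriction of $f$ to the line $\mathbb{R}v_s$ is linear.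
   Context: $N$ is a lattice of rank $m$, $M=\mathrm{Hom}(N,\mathbb{Z})$, $N_{\mathbb{R}}=N\otimes\mathbb{R}$, $M_{\mathbb{R}}=M\otimes\mathbb{R}$; $\Sigma$ is a complete simplicial fan in $N_{\mathbb{R}}$ with $n$ rays and $v_i\in N$ a nonzero lattice point on the $i$-th ray ($\mathbf{\Sigma}=(\Sigma,\{v_i\})$), with associated toric DM stack $\mathbb{P}_{\mathbf{\Sigma}}$. $\mathrm{Pic}_{\mathbb{R}}(\mathbb{P}_{\mathbf{\Sigma}})=\mathrm{Pic}(\mathbb{P}_{\mathbf{\Sigma}})\otimes\mathbb{R}$ is identified with $\mathbb{R}^n/\{\sum_i w(v_i)E_i:w\in M_{\mathbb{R}}\}$, where $E_1,\dots,E_n$ is the standard basis of $\mathbb{R}^n$. A $\mathbf{\Sigma}$-piecewise linear function is a continuous function $N_{\mathbb{R}}\to\mathbb{R}$ whose restriction to each cone of $\Sigma$ is linear. *)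

theory Defs
  imports "HOL-Analysis.Analysis"
begin

text \<open>N = Z^m inside N_R = real^'m (after choosing a basis); M_R is identified with
  real^'m via the inner product, so w(v) = w \<bullet> v. Rays are indexed by {..<n}.\<close>

definition lattice_vecs :: "nat \<Rightarrow> (nat \<Rightarrow> real^'m) \<Rightarrow> bool" where
  "lattice_vecs n v \<longleftrightarrow> (\<forall>i<n. \<forall>j. v i $ j \<in> \<int>)"

definition cone_of :: "(nat \<Rightarrow> real^'m) \<Rightarrow> nat set \<Rightarrow> (real^'m) set" where
  "cone_of v \<sigma> = {x. \<exists>c. (\<forall>i\<in>\<sigma>. c i \<ge> 0) \<and> x = (\<Sum>i\<in>\<sigma>. c i *\<^sub>R v i)}"

text \<open>A complete simplicial fan with rays v 0, ..., v (n-1): a simplicial cone is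
  determined by the set of rays spanning it, so the fan is a set Sig of index sets.\<close>
definition complete_simplicial_fan ::
  "nat \<Rightarrow> (nat \<Rightarrow> real^'m) \<Rightarrow> nat set set \<Rightarrow> bool" where
  "complete_simplicial_fan n v Sig \<longleftrightarrow>
     (\<forall>\<sigma>\<in>Sig. \<sigma> \<subseteq> {..<n}) \<and>
     (\<forall>\<sigma>\<in>Sig. inj_on v \<sigma> \<and> independent (v ` \<sigma>)) \<and>
     (\<forall>\<sigma>\<in>Sig. \<forall>\<tau>. \<tau> \<subseteq> \<sigma> \<longrightarrow> \<tau> \<in> Sig) \<and>
     (\<forall>i<n. {i} \<in> Sig) \<and>
     (\<forall>\<sigma>\<in>Sig. \<forall>\<tau>\<in>Sig. cone_of v \<sigma> \<inter> cone_of v \<tau> = cone_of v (\<sigma> \<inter> \<tau>)) \<and>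
     (\<Union>\<sigma>\<in>Sig. cone_of v \<sigma>) = UNIV"

definition sigma_pl :: "(nat \<Rightarrow> real^'m) \<Rightarrow> nat set set \<Rightarrow> (real^'m \<Rightarrow> real) \<Rightarrow> bool" where
  "sigma_pl v Sig f \<longleftrightarrow> continuous_on UNIV f \<and>
     (\<forall>\<sigma>\<in>Sig. \<exists>l. linear l \<and> (\<forall>x\<in>cone_of v \<sigma>. f x = l x))"

text \<open>Equality of sum_i a_i E_i and sum_i b_i E_i in Pic_R = R^n / {(w(v_i))_i}.\<close>
definition pic_eq :: "nat \<Rightarrow> (nat \<Rightarrow> real^'m) \<Rightarrow> (nat \<Rightarrow> real) \<Rightarrow> (nat \<Rightarrow> real) \<Rightarrow> bool" where
  "pic_eq n v a b \<longleftrightarrow> (\<exists>w::real^'m. \<forall>i<n. a i - b i = w \<bullet> v i)"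

definition linear_on :: "(real^'m) set \<Rightarrow> (real^'m \<Rightarrow> real) \<Rightarrow> bool" where
  "linear_on S f \<longleftrightarrow> (\<exists>l. linear l \<and> (\<forall>x\<in>S. f x = l x))"

end

theory Submission
  imports Defs
begin

lemma avoid_hyp:
  fixes vs :: "real^'m" and v :: "nat \<Rightarrow> real^'m"
  assumes fin: "finite I" and nsp: "\<forall>i\<in>I. v i \<notin> span {vs}" and w0: "w0 \<bullet> vs = a"
  shows "\<exists>w. w \<bullet> vs = a \<and> (\<forall>i\<in>I. w \<bullet> v i \<noteq> b i)"
  using fin nsp
proof (induction I rule: finite_induct)
  case empty
  then show ?case using w0 by auto
next
  case (insert j F)
  then obtain w where w: "w \<bullet> vs = a" "\<forall>i\<in>F. w \<bullet> v i \<noteq> b i" by auto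
  show ?case
  proof (cases "w \<bullet> v j = b j")
    case False
    then show ?thesis using w by auto
  next
    case True
    define c where "c = (v j \<bullet> vs) / (vs \<bullet> vs)"
    define d where "d = v j - c *\<^sub>R vs"
    have dvs: "d \<bullet> vs = 0"
      by (cases "vs = 0") (auto simp: d_def c_def inner_diff_left)
    have vj: "v j = d + c *\<^sub>R vs" by (simp add: d_def)
    have dvj: "d \<bullet> v j = d \<bullet> d"
      by (subst vj) (simp add: inner_add_right dvs)
    have "d \<noteq> 0"
    proof
      assume "d = 0"
      then have "v j = c *\<^sub>R vs" using vj by simp
      then have "v j \<in> span {vs}" by (simp add: span_base span_mul)
      then show False using insert.prems by auto
    qed
    then have dd: "d \<bullet> v j \<noteq> 0" using dvj by simp
    define B where "B = insert 0 ((\<lambda>i. (b i - w \<bullet> v i) / (d \<bullet> v i)) ` F)"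
    have "finite B" using insert.hyps by (simp add: B_def)
    then obtain e :: real where e: "e \<notin> B"
      using ex_new_if_finite[OF infinite_UNIV_char_0] by blast
    define w' where "w' = w + e *\<^sub>R d"
    have "w' \<bullet> vs = a" using w dvs by (simp add: w'_def inner_add_left)
    moreover have "w' \<bullet> v j \<noteq> b j"
      using True e dd by (auto simp: w'_def inner_add_left B_def)
    moreover have "w' \<bullet> v i \<noteq> b i" if "i \<in> F" for i
    proof
      assume h: "w' \<bullet> v i = b i"
      then have h2: "w \<bullet> v i + e * (d \<bullet> v i) = b i" by (simp add: w'_def inner_add_left)
      show False
      proof (cases "d \<bullet> v i = 0")
        case True
        then show False using h2 w that by auto
      next
        case False
        then have "e = (b i - w \<bullet> v i) / (d \<bullet> v i)" using h2 by (simp add: field_simps)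
        then show False using e that by (auto simp: B_def)
      qed
    qed
    ultimately show ?thesis by auto
  qed
qed

lemma cone_single: "y \<ge> 0 \<Longrightarrow> y *\<^sub>R v s \<in> cone_of v {s}"
  unfolding cone_of_def by (rule CollectI, rule exI[of _ "\<lambda>_. y"]) simp

lemma cone_single_iff: "x \<in> cone_of v {s} \<longleftrightarrow> (\<exists>y\<ge>0. x = y *\<^sub>R v s)"
  unfolding cone_of_def by auto

theorem lemma4p1:
  fixes n :: nat and v :: "nat \<Rightarrow> real^'m" and Sig :: "nat set set"
    and f :: "real^'m \<Rightarrow> real" and s :: nat
  assumes "complete_simplicial_fan n v Sig" and "lattice_vecs n v"
    and "sigma_pl v Sig f" and "s < n"
  shows "\<exists>g. sigma_pl v Sig g \<and>
           pic_eq n v (\<lambda>i. f (v i)) (\<lambda>i. g (v i)) \<and>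
           g (v s) = 0 \<and>
           (\<forall>i<n. v i \<notin> span {v s} \<longrightarrow> g (v i) \<noteq> 0) \<and>
           (\<forall>t<n. t \<noteq> s \<and> v t \<in> span {v s} \<longrightarrow>
               (g (v t) = 0 \<longleftrightarrow> linear_on (span {v s}) f))"
proof -
  note fan = assms(1)[unfolded complete_simplicial_fan_def]
  note single0 = fan[THEN conjunct2, THEN conjunct2, THEN conjunct2, THEN conjunct1]
  note indep0 = fan[THEN conjunct2, THEN conjunct1]
  note inter0 = fan[THEN conjunct2, THEN conjunct2, THEN conjunct2, THEN conjunct2, THEN conjunct1]
  have single: "\<And>i. i < n \<Longrightarrow> {i} \<in> Sig" using single0 by simp
  have indep: "\<And>\<sigma>. \<sigma> \<in> Sig \<Longrightarrow> independent (v ` \<sigma>)" using indep0 by simp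
  have inter: "\<And>\<sigma> \<tau>. \<sigma> \<in> Sig \<Longrightarrow> \<tau> \<in> Sig \<Longrightarrow> cone_of v \<sigma> \<inter> cone_of v \<tau> = cone_of v (\<sigma> \<inter> \<tau>)"
    using inter0 by simp
  have nz: "v i \<noteq> 0" if "i < n" for i
  proof -
    have "{i} \<in> Sig" using single that by simp
    then have "independent (v ` {i})" by (rule indep)
    then show ?thesis by simp
  qed
  have lin1: "f (y *\<^sub>R v i) = y * f (v i)" if "i < n" "y \<ge> 0" for i y
  proof -
    have "{i} \<in> Sig" using single that by simp
    then obtain l where l: "linear l" "\<forall>x\<in>cone_of v {i}. f x = l x"
      using assms(3) unfolding sigma_pl_def by blast
    have "v i \<in> cone_of v {i}" using cone_single[of 1 v i] by simp
    then have e1: "f (v i) = l (v i)" using l(2) by blast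
    have e2: "f (y *\<^sub>R v i) = l (y *\<^sub>R v i)" using l(2) cone_single[OF that(2), of v i] by blast
    show ?thesis unfolding e1 e2 linear_cmul[OF l(1)] by simp
  qed
  define w0 where "w0 = (f (v s) / (v s \<bullet> v s)) *\<^sub>R v s"
  have "w0 \<bullet> v s = f (v s)" using nz[OF assms(4)] by (simp add: w0_def)
  moreover have "finite {i. i < n \<and> v i \<notin> span {v s}}" by simp
  moreover have "\<forall>i\<in>{i. i < n \<and> v i \<notin> span {v s}}. v i \<notin> span {v s}" by simp
  ultimately obtain w where w: "w \<bullet> v s = f (v s)"
    "\<forall>i\<in>{i. i < n \<and> v i \<notin> span {v s}}. w \<bullet> v i \<noteq> f (v i)"
    using avoid_hyp[of "{i. i < n \<and> v i \<notin> span {v s}}" v "v s" w0 "f (v s)" "\<lambda>i. f (v i)"]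
    by blast
  define g where "g x = f x - w \<bullet> x" for x
  have "sigma_pl v Sig g"
    unfolding sigma_pl_def
  proof (intro conjI ballI)
    show "continuous_on UNIV g" using assms(3) unfolding sigma_pl_def g_def
      by (intro continuous_intros) auto
  next
    fix \<sigma> assume "\<sigma> \<in> Sig"
    then obtain l where l: "linear l" "\<forall>x\<in>cone_of v \<sigma>. f x = l x"
      using assms(3) unfolding sigma_pl_def by blast
    have "linear (\<lambda>x. l x - w \<bullet> x)"
      using l(1) unfolding linear_iff
      by (auto simp: inner_add_right algebra_simps)
    then show "\<exists>l. linear l \<and> (\<forall>x\<in>cone_of v \<sigma>. g x = l x)"
      using l(2) by (auto simp: g_def)
  qed
  moreover have "pic_eq n v (\<lambda>i. f (v i)) (\<lambda>i. g (v i))"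
    unfolding pic_eq_def g_def by (auto simp: inner_commute)
  moreover have "g (v s) = 0" using w by (simp add: g_def)
  moreover have "\<forall>i<n. v i \<notin> span {v s} \<longrightarrow> g (v i) \<noteq> 0" using w by (auto simp: g_def)
  moreover have "g (v t) = 0 \<longleftrightarrow> linear_on (span {v s}) f"
    if t: "t < n" "t \<noteq> s" "v t \<in> span {v s}" for t
  proof -
    obtain c where c: "v t = c *\<^sub>R v s" using t(3) by (auto simp: span_singleton)
    have "{s} \<in> Sig" "{t} \<in> Sig" using single t assms(4) by auto
    then have "cone_of v {s} \<inter> cone_of v {t} = cone_of v ({s} \<inter> {t})" using inter by blast
    also have "\<dots> = {0}" using t(2) by (simp add: cone_of_def)
    finally have cap: "cone_of v {s} \<inter> cone_of v {t} = {0}" .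
    have cneg: "c < 0"
    proof (rule ccontr)
      assume "\<not> c < 0"
      then have "v t \<in> cone_of v {s}" using c cone_single[of c v s] by simp
      moreover have "v t \<in> cone_of v {t}" using cone_single[of 1 v t] by simp
      ultimately show False using cap nz[OF t(1)] by blast
    qed
    have gvt: "g (v t) = f (v t) - c * f (v s)"
      using w c by (simp add: g_def)
    show ?thesis
    proof
      assume "g (v t) = 0"
      then have ft: "f (v t) = c * f (v s)" using gvt by simp
      define l where "l x = (x \<bullet> v s) / (v s \<bullet> v s) * f (v s)" for x
      have ll: "linear l" unfolding linear_iff l_def
        by (auto simp: inner_add_left add_divide_distrib algebra_simps)
      have "f x = l x" if xs: "x \<in> span {v s}" for x
      proof -
        obtain k where k: "x = k *\<^sub>R v s" using xs by (auto simp: span_singleton)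
        have lx: "l x = k * f (v s)" using nz[OF assms(4)] by (simp add: l_def k)
        show ?thesis
        proof (cases "k \<ge> 0")
          case True
          then show ?thesis using lin1[OF assms(4) True] k lx by simp
        next
          case False
          have "x = (k / c) *\<^sub>R v t" using k c cneg by simp
          moreover have "k / c \<ge> 0" using False cneg by (simp add: divide_nonpos_neg)
          ultimately have "f x = (k / c) * f (v t)" using lin1[OF t(1)] by simp
          then show ?thesis using ft lx cneg by simp
        qed
      qed
      then show "linear_on (span {v s}) f" unfolding linear_on_def using ll by blast
    next
      assume "linear_on (span {v s}) f"
      then obtain l where l: "linear l" "\<forall>x\<in>span {v s}. f x = l x"
        unfolding linear_on_def by blast
      have "v s \<in> span {v s}" by (simp add: span_base)
      then have "f (v t) = c * f (v s)" using l t(3) c by (simp add: linear_cmul)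
      then show "g (v t) = 0" using gvt by simp
    qed
  qed
  ultimately show ?thesis by blast
qed

end
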